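(* There is a mapping $\Phi :(\mathfrak{M}, \supseteq )\rightarrow (\mathfrak{M_H}, \supseteq )$ such that for every $I\in \mathfrak{M}$, $\Phi (I)\supseteq I$ and $\Phi (I)\approx _{\mathrm{sep}} I$.
   Context: All ideals on $\omega$ considered are proper and contain all finite subsets of $\omega$; they are viewed as subsets of the Cantor space $2^\omega=\mathcal{P}(\omega)$. $\mathfrak{M}$ is the set of all ideals on $\omega$ that are meager subsets of $2^\omega$, ordered by reverse inclusion $\supseteq$ (so larger ideals are stronger conditions). For $X\subseteq\omega$ and an ideal $I$, $I\upharpoonright X=\{A\in I: A\subseteq X\}$, and $I^+=\mathcal{P}(\omega)\setminus I$. An ideal $I$ is hereditary meager if for every $X\in I^+$ the set $I\upharpoonright X$ is meager in $2^X$; $\mathfrak{M_H}$ is the set of hereditary meager ideals ordered by $\supseteq$. Two meager ideals are compatible (in $(\mathfrak{M},\supseteq)$) if some meager ideal contains both, and disjoint otherwise. For $I,J\in\mathfrak{M}$, $I\approx_{\mathrm{sep}}J$ means: for every meager ideal $K$, $K$ is disjoint with $I$ iff $K$ is disjoint with $J$. *)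

theory Defs
  imports "HOL-Analysis.Analysis"
begin

definition is_ideal :: "nat set set \<Rightarrow> bool" where
  "is_ideal I \<longleftrightarrow>
     (\<forall>A B. A \<in> I \<longrightarrow> B \<subseteq> A \<longrightarrow> B \<in> I) \<and>
     (\<forall>A B. A \<in> I \<longrightarrow> B \<in> I \<longrightarrow> A \<union> B \<in> I) \<and>
     (\<forall>A. finite A \<longrightarrow> A \<in> I) \<and>
     UNIV \<notin> I"

text \<open>Cantor space 2^omega: nat => bool with the product topology (bool discrete);
  a set A of naturals is identified with its characteristic function.\<close>
definition cantor :: "(nat \<Rightarrow> bool) topology" where
  "cantor = product_topology (\<lambda>_. euclidean) UNIV"

definition code :: "nat set \<Rightarrow> (nat \<Rightarrow> bool)" where
  "code A = (\<lambda>n. n \<in> A)"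

definition nowhere_dense_in :: "'a topology \<Rightarrow> 'a set \<Rightarrow> bool" where
  "nowhere_dense_in X S \<longleftrightarrow> S \<subseteq> topspace X \<and> X interior_of (X closure_of S) = {}"

definition meager_in :: "'a topology \<Rightarrow> 'a set \<Rightarrow> bool" where
  "meager_in X S \<longleftrightarrow>
     (\<exists>F. countable F \<and> (\<forall>N\<in>F. nowhere_dense_in X N) \<and> S \<subseteq> \<Union>F)"

definition meager_fam :: "nat set set \<Rightarrow> bool" where
  "meager_fam \<A> \<longleftrightarrow> meager_in cantor (code ` \<A>)"

text \<open>2^X is identified with P(X), a (closed) subspace of 2^omega.\<close>
definition meager_fam_on :: "nat set \<Rightarrow> nat set set \<Rightarrow> bool" where
  "meager_fam_on X \<A> \<longleftrightarrow> meager_in (subtopology cantor (code ` Pow X)) (code ` \<A>)"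

definition restr :: "nat set set \<Rightarrow> nat set \<Rightarrow> nat set set" where
  "restr I X = {A \<in> I. A \<subseteq> X}"

definition MI :: "nat set set set" where
  "MI = {I. is_ideal I \<and> meager_fam I}"

definition MH :: "nat set set set" where
  "MH = {I. is_ideal I \<and> (\<forall>X. X \<notin> I \<longrightarrow> meager_fam_on X (restr I X))}"

definition compatible_ideals :: "nat set set \<Rightarrow> nat set set \<Rightarrow> bool" where
  "compatible_ideals I J \<longleftrightarrow> (\<exists>K\<in>MI. I \<subseteq> K \<and> J \<subseteq> K)"

definition disjoint_ideals :: "nat set set \<Rightarrow> nat set set \<Rightarrow> bool" where
  "disjoint_ideals I J \<longleftrightarrow> \<not> compatible_ideals I J"

definition sep_equiv :: "nat set set \<Rightarrow> nat set set \<Rightarrow> bool" where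
  "sep_equiv I J \<longleftrightarrow> (\<forall>K\<in>MI. disjoint_ideals K I \<longleftrightarrow> disjoint_ideals K J)"

end

theory Submission
  imports Defs
begin

definition UB :: "nat set \<Rightarrow> (nat \<Rightarrow> bool) \<Rightarrow> (nat \<Rightarrow> bool) set" where
  "UB D f = {g. \<forall>i\<in>D. g i = f i}"

lemma topspace_cantor[simp]: "topspace cantor = UNIV"
  by (simp add: cantor_def)

lemma UB_open: "finite D \<Longrightarrow> openin cantor (UB D f)"
  unfolding cantor_def openin_product_topology_alt
proof (intro ballI)
  fix x assume D: "finite D" and x: "x \<in> UB D f"
  let ?U = "\<lambda>i. if i \<in> D then {f i} else UNIV"
  have "{i \<in> UNIV. ?U i \<noteq> topspace euclidean} \<subseteq> D" by auto
  hence "finite {i \<in> UNIV. ?U i \<noteq> topspace euclidean}" using D finite_subset by blast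
  moreover have "\<forall>i\<in>UNIV. openin euclidean (?U i)" by (auto simp: open_discrete)
  moreover have "x \<in> Pi\<^sub>E UNIV ?U" using x by (auto simp: UB_def)
  moreover have "Pi\<^sub>E UNIV ?U \<subseteq> UB D f"
  proof
    fix h assume h: "h \<in> Pi\<^sub>E UNIV ?U"
    have hi: "h i \<in> ?U i" for i using h by (simp add: PiE_iff)
    show "h \<in> UB D f" unfolding UB_def
    proof (intro CollectI ballI)
      fix i assume "i \<in> D"
      with hi[of i] show "h i = f i" by simp
    qed
  qed
  ultimately show "\<exists>U. finite {i \<in> UNIV. U i \<noteq> topspace euclidean} \<and>
                 (\<forall>i \<in> UNIV. openin euclidean (U i)) \<and> x \<in> Pi\<^sub>E UNIV U \<and> Pi\<^sub>E UNIV U \<subseteq> UB D f"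
    by (intro exI[of _ ?U]) blast
qed

lemma UB_nbhd: "openin cantor W \<Longrightarrow> x \<in> W \<Longrightarrow> \<exists>D. finite D \<and> UB D x \<subseteq> W"
proof -
  assume "openin cantor W" "x \<in> W"
  then obtain U where U: "finite {i \<in> UNIV. U i \<noteq> topspace (euclidean::bool topology)}"
     "x \<in> Pi\<^sub>E UNIV U" "Pi\<^sub>E UNIV U \<subseteq> W"
    unfolding cantor_def openin_product_topology_alt by blast
  let ?D = "{i \<in> UNIV. U i \<noteq> topspace (euclidean::bool topology)}"
  have "UB ?D x \<subseteq> Pi\<^sub>E UNIV U"
  proof
    fix g assume g: "g \<in> UB ?D x"
    show "g \<in> Pi\<^sub>E UNIV U"
    proof (simp add: PiE_def Pi_def, intro allI)
      fix i show "g i \<in> U i"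
        using g U(2) by (cases "i \<in> ?D") (auto simp: UB_def PiE_def Pi_def)
    qed
  qed
  thus ?thesis using U by (intro exI[of _ ?D]) blast
qed

lemma UB_self: "f \<in> UB D f" by (simp add: UB_def)

lemma nowhere_denseI:
  assumes "S \<subseteq> topspace X"
    and "\<And>W. openin X W \<Longrightarrow> W \<noteq> {} \<Longrightarrow> \<exists>V. openin X V \<and> V \<noteq> {} \<and> V \<subseteq> W \<and> V \<inter> S = {}"
  shows "nowhere_dense_in X S"
  unfolding nowhere_dense_in_def
proof (intro conjI assms(1))
  show "X interior_of (X closure_of S) = {}"
  proof (rule ccontr)
    assume ne: "X interior_of (X closure_of S) \<noteq> {}"
    obtain V where V: "openin X V" "V \<noteq> {}" "V \<subseteq> X interior_of (X closure_of S)" "V \<inter> S = {}"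
      using assms(2)[OF openin_interior_of ne] by blast
    then obtain v where v: "v \<in> V" by blast
    have "v \<in> X closure_of S" using V(3) v interior_of_subset[of X "X closure_of S"] by blast
    then have "\<exists>y. y \<in> S \<and> y \<in> V" using V(1) v unfolding in_closure_of by blast
    then show False using V(4) by blast
  qed
qed

lemma nowhere_denseD:
  assumes "nowhere_dense_in X S" "openin X W" "W \<noteq> {}"
  shows "\<exists>V. openin X V \<and> V \<noteq> {} \<and> V \<subseteq> W \<and> V \<inter> S = {}"
proof -
  let ?V = "W - X closure_of S"
  have "openin X ?V" using assms(2) by (simp add: openin_diff)
  moreover have "?V \<noteq> {}"
  proof
    assume "?V = {}"
    hence "W \<subseteq> X closure_of S" by blast
    hence "W \<subseteq> X interior_of (X closure_of S)" using assms(2) interior_of_maximal by blast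
    thus False using assms(1,3) by (auto simp: nowhere_dense_in_def)
  qed
  moreover have "?V \<inter> S = {}" using closure_of_subset assms(1) unfolding nowhere_dense_in_def by blast
  ultimately show ?thesis by (intro exI[of _ ?V]) blast
qed

definition fseq :: "(nat \<Rightarrow> nat set) \<Rightarrow> bool" where
  "fseq P \<longleftrightarrow> (\<forall>n. finite (P n) \<and> P n \<noteq> {} \<and> (\<forall>x\<in>P n. n \<le> x))"

definition avoids :: "nat set set \<Rightarrow> (nat \<Rightarrow> nat set) \<Rightarrow> bool" where
  "avoids L P \<longleftrightarrow> (\<forall>A\<in>L. finite {n. P n \<subseteq> A})"

lemma code_inj[simp]: "code A = code B \<longleftrightarrow> A = B"
  unfolding code_def by (metis Collect_mem_eq)

lemma code_apply[simp]: "code A i = (i \<in> A)" by (simp add: code_def)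

lemma easy:
  assumes fs: "fseq P" and PX: "\<And>n. P n \<subseteq> X" and av: "avoids L P" and LX: "\<And>A. A \<in> L \<Longrightarrow> A \<subseteq> X"
  shows "meager_fam_on X L"
proof -
  define Y where "Y = code ` Pow X"
  define T where "T = subtopology cantor Y"
  define N where "N m = code ` {A. A \<subseteq> X \<and> (\<forall>k\<ge>m. \<not> P k \<subseteq> A)}" for m
  have topT: "topspace T = Y" by (simp add: T_def)
  have nd: "nowhere_dense_in T (N m)" for m
  proof (rule nowhere_denseI)
    show "N m \<subseteq> topspace T" unfolding topT N_def Y_def by auto
  next
    fix W assume W: "openin T W" "W \<noteq> {}"
    obtain Tt where Tt: "openin cantor Tt" "W = Tt \<inter> Y" using W(1) unfolding T_def openin_subtopology by blast
    obtain w where w: "w \<in> W" using W(2) by blast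
    obtain B where B: "B \<subseteq> X" "w = code B" using w Tt(2) unfolding Y_def by blast
    obtain D where D: "finite D" "UB D w \<subseteq> Tt" using UB_nbhd[OF Tt(1)] w Tt(2) by blast
    obtain b where b: "D \<subseteq> {..<b}" using D(1) finite_nat_bounded by blast
    define n where "n = b + m"
    have Pn: "P n \<inter> D = {}" using fs b unfolding fseq_def n_def by fastforce
    define g where "g = code ((B \<inter> D) \<union> P n)"
    define V where "V = UB (D \<union> P n) g \<inter> Y"
    have fPn: "finite (P n)" using fs by (simp add: fseq_def)
    have "openin T V" unfolding V_def T_def openin_subtopology
      using UB_open[of "D \<union> P n" g] D(1) fPn by auto
    moreover have "g \<in> V" unfolding V_def Y_def g_def using B PX[of n] by (auto simp: UB_def)
    moreover have "V \<subseteq> W"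
    proof
      fix h assume h: "h \<in> V"
      have "h \<in> UB D w"
        using h Pn unfolding V_def UB_def g_def B(2) by auto
      thus "h \<in> W" using h D(2) Tt(2) unfolding V_def by blast
    qed
    moreover have "V \<inter> N m = {}"
    proof (rule ccontr)
      assume "V \<inter> N m \<noteq> {}"
      then obtain A where A: "code A \<in> V" "\<forall>k\<ge>m. \<not> P k \<subseteq> A" unfolding N_def by blast
      have "P n \<subseteq> A" using A(1) unfolding V_def UB_def g_def by auto
      thus False using A(2) n_def by auto
    qed
    ultimately show "\<exists>V. openin T V \<and> V \<noteq> {} \<and> V \<subseteq> W \<and> V \<inter> N m = {}" by (intro exI[of _ V]) blast
  qed
  have cov: "code ` L \<subseteq> \<Union>(range N)"
  proof
    fix c assume "c \<in> code ` L"
    then obtain A where A: "A \<in> L" "c = code A" by blast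
    obtain b where b: "{n. P n \<subseteq> A} \<subseteq> {..<b}" using av A(1) finite_nat_bounded unfolding avoids_def by blast
    have "c \<in> N b" unfolding N_def A(2) using b LX[OF A(1)] by force
    thus "c \<in> \<Union>(range N)" by blast
  qed
  show ?thesis unfolding meager_fam_on_def meager_in_def
  proof (intro exI[of _ "range N"] conjI)
    show "countable (range N)" by simp
    show "\<forall>N'\<in>range N. nowhere_dense_in (subtopology cantor (code ` Pow X)) N'"
      using nd unfolding T_def Y_def by blast
    show "code ` L \<subseteq> \<Union>(range N)" by (rule cov)
  qed
qed

lemma nd_empty: "nowhere_dense_in cantor {}"
  by (simp add: nowhere_dense_in_def)

lemma step_nd:
  assumes N: "nowhere_dense_in cantor N" and D: "finite D"
  shows "\<exists>D' g. finite D' \<and> D \<subseteq> D' \<and> (\<forall>i\<in>D. g i = f i) \<and> UB D' g \<inter> N = {}"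
proof -
  have "openin cantor (UB D f)" using UB_open[OF D] .
  moreover have "UB D f \<noteq> {}" using UB_self by blast
  ultimately obtain V where V: "openin cantor V" "V \<noteq> {}" "V \<subseteq> UB D f" "V \<inter> N = {}"
    using nowhere_denseD[OF N] by blast
  obtain x where x: "x \<in> V" using V(2) by blast
  obtain E where E: "finite E" "UB E x \<subseteq> V" using UB_nbhd[OF V(1) x] by blast
  have "UB (D \<union> E) x \<subseteq> UB E x" by (auto simp: UB_def)
  hence "UB (D \<union> E) x \<inter> N = {}" using E V(4) by blast
  moreover have "\<forall>i\<in>D. x i = f i" using x V(3) by (auto simp: UB_def)
  ultimately show ?thesis using D E(1) by (intro exI[of _ "D \<union> E"] exI[of _ x]) auto
qed

lemma stage:
  assumes G: "\<And>j. nowhere_dense_in cantor (G j)" and Q: "finite Q"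
    and Qt: "\<forall>(t,j)\<in>Q. t \<subseteq> {..<n}"
  shows "\<exists>m s. m > n \<and> s \<subseteq> {n..<m} \<and> (\<forall>(t,j)\<in>Q. \<forall>A. A \<inter> {..<m} = t \<union> s \<longrightarrow> code A \<notin> G j)"
  using Q Qt
proof (induction Q rule: finite_induct)
  case empty
  show ?case by (intro exI[of _ "Suc n"] exI[of _ "{}"]) auto
next
  case (insert p Q)
  obtain t j where p: "p = (t, j)" by (cases p)
  have tn: "t \<subseteq> {..<n}" using insert.prems p by auto
  have "\<forall>(t,j)\<in>Q. t \<subseteq> {..<n}" using insert.prems by auto
  then obtain m s where ms: "m > n" "s \<subseteq> {n..<m}" "\<forall>(t,j)\<in>Q. \<forall>A. A \<inter> {..<m} = t \<union> s \<longrightarrow> code A \<notin> G j"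
    using insert.IH by blast
  obtain D' g where Dg: "finite D'" "{..<m} \<subseteq> D'" "\<forall>i\<in>{..<m}. g i = code (t \<union> s) i" "UB D' g \<inter> G j = {}"
    using step_nd[OF G[of j], of "{..<m}" "code (t \<union> s)"] by blast
  obtain b where b: "D' \<subseteq> {..<b}" using Dg(1) finite_nat_bounded by blast
  define m' where "m' = max m b"
  define s' where "s' = s \<union> {i. m \<le> i \<and> i < m' \<and> g i}"
  have s'm: "s' \<inter> {..<m} = s" using ms(2) unfolding s'_def by auto
  have hm: "m' > n" using ms(1) m'_def by auto
  have hs: "s' \<subseteq> {n..<m'}" using ms(1,2) unfolding s'_def m'_def by (auto simp: subset_iff less_max_iff_disj)
  have hQ: "\<forall>(t0,j0)\<in>Q. \<forall>A. A \<inter> {..<m'} = t0 \<union> s' \<longrightarrow> code A \<notin> G j0"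
  proof (intro ballI allI impI, clarify)
    fix t0 j0 A assume tj: "(t0, j0) \<in> Q" and A: "A \<inter> {..<m'} = t0 \<union> s'" and c: "code A \<in> G j0"
    have t0n: "t0 \<subseteq> {..<n}" using tj insert.prems by auto
    have "A \<inter> {..<m} = (A \<inter> {..<m'}) \<inter> {..<m}" using m'_def by auto
    also have "\<dots> = t0 \<union> s" using A s'm t0n ms(1) by auto
    finally show False using ms(3) tj c by auto
  qed
  have hp: "\<forall>A. A \<inter> {..<m'} = t \<union> s' \<longrightarrow> code A \<notin> G j"
  proof (intro allI impI)
    fix A assume A: "A \<inter> {..<m'} = t \<union> s'"
    have "code A \<in> UB D' g"
      unfolding UB_def
    proof (intro CollectI ballI)
      fix i assume i: "i \<in> D'"
      have im': "i < m'" using i b m'_def by auto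
      have iA: "(i \<in> A) = (i \<in> t \<union> s')" using A im' by blast
      show "code A i = g i"
      proof (cases "i < m")
        case True
        then show ?thesis using iA Dg(3) s'm by auto
      next
        case False
        then show ?thesis using iA tn ms(1,2) im' unfolding s'_def by auto
      qed
    qed
    thus "code A \<notin> G j" using Dg(4) by blast
  qed
  have "\<forall>(t0,j0)\<in>insert p Q. \<forall>A. A \<inter> {..<m'} = t0 \<union> s' \<longrightarrow> code A \<notin> G j0"
  proof
    fix x assume "x \<in> insert p Q"
    then consider "x = p" | "x \<in> Q" by blast
    then show "case x of (t0,j0) \<Rightarrow> \<forall>A. A \<inter> {..<m'} = t0 \<union> s' \<longrightarrow> code A \<notin> G j0"
    proof cases
      case 1 then show ?thesis using hp p by simp
    next
      case 2 then show ?thesis using hQ by blast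
    qed
  qed
  then show ?case by (intro exI[of _ m'] exI[of _ s'] conjI hm hs)
qed

definition nxt :: "(nat \<Rightarrow> (nat \<Rightarrow> bool) set) \<Rightarrow> nat \<Rightarrow> nat \<Rightarrow> nat \<times> nat set" where
  "nxt G k n = (SOME p. fst p > n \<and> snd p \<subseteq> {n..<fst p} \<and>
      (\<forall>t j A. t \<subseteq> {..<n} \<longrightarrow> j \<le> k \<longrightarrow> A \<inter> {..<fst p} = t \<union> snd p \<longrightarrow> code A \<notin> G j))"

primrec ns :: "(nat \<Rightarrow> (nat \<Rightarrow> bool) set) \<Rightarrow> nat \<Rightarrow> nat" where
  "ns G 0 = 0"
| "ns G (Suc k) = fst (nxt G k (ns G k))"

definition ss :: "(nat \<Rightarrow> (nat \<Rightarrow> bool) set) \<Rightarrow> nat \<Rightarrow> nat set" where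
  "ss G k = snd (nxt G k (ns G k))"

lemma nxt_prop:
  assumes G: "\<And>j. nowhere_dense_in cantor (G j)"
  shows "fst (nxt G k n) > n \<and> snd (nxt G k n) \<subseteq> {n..<fst (nxt G k n)} \<and>
      (\<forall>t j A. t \<subseteq> {..<n} \<longrightarrow> j \<le> k \<longrightarrow> A \<inter> {..<fst (nxt G k n)} = t \<union> snd (nxt G k n) \<longrightarrow> code A \<notin> G j)"
proof -
  have ex: "\<exists>m s. m > n \<and> s \<subseteq> {n..<m} \<and> (\<forall>(t,j)\<in>Pow {..<n} \<times> {..k}. \<forall>A. A \<inter> {..<m} = t \<union> s \<longrightarrow> code A \<notin> G j)"
    by (rule stage[of G "Pow {..<n} \<times> {..k}" n]) (use G in auto)
  then obtain m s where
    ms: "m > n" "s \<subseteq> {n..<m}" "\<forall>(t,j)\<in>Pow {..<n} \<times> {..k}. \<forall>A. A \<inter> {..<m} = t \<union> s \<longrightarrow> code A \<notin> G j"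
    by blast
  have "\<exists>p. fst p > n \<and> snd p \<subseteq> {n..<fst p} \<and>
      (\<forall>t j A. t \<subseteq> {..<n} \<longrightarrow> j \<le> k \<longrightarrow> A \<inter> {..<fst p} = t \<union> snd p \<longrightarrow> code A \<notin> G j)"
    using ms by (intro exI[of _ "(m, s)"]) auto
  thus ?thesis unfolding nxt_def by (rule someI_ex)
qed

lemma ns_props:
  assumes G: "\<And>j. nowhere_dense_in cantor (G j)"
  shows "ns G k < ns G (Suc k)" "ss G k \<subseteq> {ns G k..<ns G (Suc k)}"
    "\<And>t j A. t \<subseteq> {..<ns G k} \<Longrightarrow> j \<le> k \<Longrightarrow> A \<inter> {..<ns G (Suc k)} = t \<union> ss G k \<Longrightarrow> code A \<notin> G j"
  using nxt_prop[of G "ns G k" k, OF G] unfolding ss_def by auto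

lemma block_unique:
  assumes "strict_mono f" "i \<in> {f k..<f (Suc k)}" "i \<in> {f k'..<f (Suc k')}"
  shows "k = k'"
proof (rule ccontr)
  assume "k \<noteq> k'"
  then consider "Suc k \<le> k'" | "Suc k' \<le> k" by linarith
  then show False
  proof cases
    case 1 then have "f (Suc k) \<le> f k'" using assms(1) strict_mono_less_eq by blast
    then show False using assms(2,3) by auto
  next
    case 2 then have "f (Suc k') \<le> f k" using assms(1) strict_mono_less_eq by blast
    then show False using assms(2,3) by auto
  qed
qed

lemma hard:
  assumes down: "\<And>A B. A \<in> L \<Longrightarrow> B \<subseteq> A \<Longrightarrow> B \<in> L" and mg: "meager_fam L"
  shows "\<exists>P. fseq P \<and> avoids L P"
proof -
  obtain F where F: "countable F" "\<forall>N\<in>F. nowhere_dense_in cantor N" "code ` L \<subseteq> \<Union>F"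
    using mg unfolding meager_fam_def meager_in_def by blast
  define F' where "F' = insert {} F"
  define G where "G = from_nat_into F'"
  have F'ne: "F' \<noteq> {}" "countable F'" using F(1) F'_def by auto
  have rG: "range G = F'" unfolding G_def using range_from_nat_into[OF F'ne] .
  have G: "nowhere_dense_in cantor (G j)" for j
  proof -
    have "G j \<in> range G" by (rule rangeI)
    hence "G j \<in> insert {} F" using rG unfolding F'_def by simp
    then consider "G j = {}" | "G j \<in> F" by blast
    then show ?thesis
    proof cases
      case 1 then show ?thesis using nd_empty by simp
    next
      case 2 then show ?thesis using F(2) by blast
    qed
  qed
  have cov: "code ` L \<subseteq> \<Union>(range G)" using F(3) rG F'_def by auto
  have sm: "strict_mono (ns G)" using ns_props(1)[of G, OF G] by (simp add: strict_mono_Suc_iff)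
  have nsk: "k \<le> ns G k" for k
    using sm by (simp add: strict_mono_imp_increasing)
  define P where "P k = {ns G k..<ns G (Suc k)}" for k
  have "fseq P" unfolding fseq_def
  proof (intro allI conjI ballI)
    fix n show "finite (P n)" by (simp add: P_def)
  next
    fix n show "P n \<noteq> {}" using ns_props(1)[of G, OF G, of n] by (simp add: P_def)
  next
    fix n x assume "x \<in> P n" thus "n \<le> x" using nsk[of n] by (simp add: P_def)
  qed
  moreover have "avoids L P"
    unfolding avoids_def
  proof (intro ballI, rule ccontr)
    fix A assume A: "A \<in> L" and inf: "infinite {n. P n \<subseteq> A}"
    define K where "K = {n. P n \<subseteq> A}"
    define A' where "A' = {i \<in> A. \<forall>k\<in>K. i \<in> P k \<longrightarrow> i \<in> ss G k}"
    have A'A: "A' \<subseteq> A" unfolding A'_def by blast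
    have A'L: "A' \<in> L" by (rule down[OF A A'A])
    have "code A' \<in> \<Union>(range G)" using cov A'L by blast
    then obtain j where j: "code A' \<in> G j" by blast
    have "\<forall>m. \<exists>n\<ge>m. n \<in> K" using inf unfolding K_def infinite_nat_iff_unbounded_le .
    then obtain k where k: "k \<in> K" "j \<le> k" by blast
    have PkA: "P k \<subseteq> A" using k(1) unfolding K_def by simp
    have ssk: "ss G k \<subseteq> P k" using ns_props(2)[of G, OF G, of k] unfolding P_def .
    have lt: "ns G k < ns G (Suc k)" using ns_props(1)[of G, OF G, of k] .
    have uniq: "k' = k" if "i \<in> P k'" "i \<in> P k" for i k'
      using block_unique[OF sm, of i k' k] that unfolding P_def by blast
    have "A' \<inter> {..<ns G (Suc k)} = (A' \<inter> {..<ns G k}) \<union> ss G k"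
    proof (intro set_eqI iffI)
      fix i assume i: "i \<in> A' \<inter> {..<ns G (Suc k)}"
      show "i \<in> (A' \<inter> {..<ns G k}) \<union> ss G k"
      proof (cases "i < ns G k")
        case True
        then show ?thesis using i by blast
      next
        case False
        hence iP: "i \<in> P k" using i unfolding P_def by simp
        have "\<forall>k'\<in>K. i \<in> P k' \<longrightarrow> i \<in> ss G k'" using i unfolding A'_def by blast
        hence "i \<in> ss G k" using k(1) iP by blast
        thus ?thesis by blast
      qed
    next
      fix i assume i: "i \<in> (A' \<inter> {..<ns G k}) \<union> ss G k"
      show "i \<in> A' \<inter> {..<ns G (Suc k)}"
      proof (cases "i \<in> ss G k")
        case True
        hence iP: "i \<in> P k" using ssk by blast
        have iA: "i \<in> A" using iP PkA by blast
        have "\<forall>k'\<in>K. i \<in> P k' \<longrightarrow> i \<in> ss G k'"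
        proof (intro ballI impI)
          fix k' assume "k' \<in> K" "i \<in> P k'"
          hence "k' = k" using uniq iP by blast
          thus "i \<in> ss G k'" using True by simp
        qed
        hence "i \<in> A'" unfolding A'_def using iA by blast
        moreover have "i < ns G (Suc k)" using iP unfolding P_def by simp
        ultimately show ?thesis by blast
      next
        case False
        hence "i \<in> A'" "i < ns G k" using i by blast+
        thus ?thesis using lt by simp
      qed
    qed
    moreover have "A' \<inter> {..<ns G k} \<subseteq> {..<ns G k}" by blast
    ultimately have "code A' \<notin> G j" using ns_props(3)[of G, OF G, where k=k and t="A' \<inter> {..<ns G k}" and j=j and A=A'] k(2) by blast
    thus False using j by blast
  qed
  ultimately show ?thesis by (intro exI[of _ P]) blast
qed

definition join :: "nat set set \<Rightarrow> nat set set \<Rightarrow> nat set set" where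
  "join L J = {C. \<exists>A\<in>L. \<exists>B\<in>J. C \<subseteq> A \<union> B}"

definition fam :: "nat set set \<Rightarrow> nat set set set" where
  "fam I = {J. is_ideal J \<and> I \<subseteq> J \<and>
     (\<forall>L P. is_ideal L \<longrightarrow> I \<subseteq> L \<longrightarrow> fseq P \<longrightarrow> avoids L P \<longrightarrow> avoids (join L J) P)}"

lemma avoids_UNIV: "fseq P \<Longrightarrow> avoids L P \<Longrightarrow> UNIV \<notin> L"
  unfolding avoids_def by auto

lemma avoids_mono: "M \<subseteq> L \<Longrightarrow> avoids L P \<Longrightarrow> avoids M P"
  unfolding avoids_def by blast

lemma ideal_empty: "is_ideal L \<Longrightarrow> {} \<in> L"
  unfolding is_ideal_def by blast

lemma ideal_down: "is_ideal L \<Longrightarrow> A \<in> L \<Longrightarrow> B \<subseteq> A \<Longrightarrow> B \<in> L"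
  unfolding is_ideal_def by blast

lemma ideal_un: "is_ideal L \<Longrightarrow> A \<in> L \<Longrightarrow> B \<in> L \<Longrightarrow> A \<union> B \<in> L"
  unfolding is_ideal_def by blast

lemma join_left: "is_ideal J \<Longrightarrow> L \<subseteq> join L J"
  unfolding join_def using ideal_empty by blast

lemma join_right: "is_ideal L \<Longrightarrow> J \<subseteq> join L J"
  unfolding join_def using ideal_empty by blast

lemma join_ideal:
  assumes L: "is_ideal L" and J: "is_ideal J" and P: "fseq P" and av: "avoids (join L J) P"
  shows "is_ideal (join L J)"
  unfolding is_ideal_def
proof (intro conjI allI impI)
  fix A B assume "A \<in> join L J" "B \<subseteq> A"
  thus "B \<in> join L J" unfolding join_def by blast
next
  fix A B assume A: "A \<in> join L J" and B: "B \<in> join L J"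
  obtain A1 B1 where 1: "A1 \<in> L" "B1 \<in> J" "A \<subseteq> A1 \<union> B1" using A unfolding join_def by blast
  obtain A2 B2 where 2: "A2 \<in> L" "B2 \<in> J" "B \<subseteq> A2 \<union> B2" using B unfolding join_def by blast
  have "A1 \<union> A2 \<in> L" using ideal_un[OF L 1(1) 2(1)] .
  moreover have "B1 \<union> B2 \<in> J" using ideal_un[OF J 1(2) 2(2)] .
  moreover have "A \<union> B \<subseteq> (A1 \<union> A2) \<union> (B1 \<union> B2)" using 1(3) 2(3) by blast
  ultimately show "A \<union> B \<in> join L J" unfolding join_def by blast
next
  fix A :: "nat set" assume "finite A"
  hence "A \<in> L" using L unfolding is_ideal_def by blast
  thus "A \<in> join L J" using join_left[OF J] by blast
next
  show "UNIV \<notin> join L J" using avoids_UNIV[OF P av] .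
qed

lemma surj_code: "code ` UNIV = UNIV"
proof -
  have "f = code {n. f n}" for f by (simp add: code_def)
  thus ?thesis by (metis surj_def)
qed

lemma meager_from_avoids:
  assumes "fseq P" "avoids L P"
  shows "meager_fam L"
proof -
  have "meager_fam_on UNIV L" by (rule easy[OF assms(1) _ assms(2)]) auto
  moreover have "code ` Pow UNIV = topspace cantor" using surj_code by simp
  ultimately show ?thesis unfolding meager_fam_on_def meager_fam_def
    by (metis subtopology_topspace)
qed

lemma MI_avoid: "I \<in> MI \<Longrightarrow> \<exists>P. fseq P \<and> avoids I P"
  unfolding MI_def using hard ideal_down by blast

lemma I_in_fam: "I \<in> MI \<Longrightarrow> I \<in> fam I"
  unfolding fam_def
proof (intro CollectI conjI allI impI subset_refl)
  assume "I \<in> MI" thus "is_ideal I" by (simp add: MI_def)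
next
  fix L P assume L: "is_ideal L" "I \<subseteq> L" and av: "avoids L P"
  have "join L I \<subseteq> L"
  proof
    fix C assume "C \<in> join L I"
    then obtain A B where "A \<in> L" "B \<in> I" "C \<subseteq> A \<union> B" unfolding join_def by blast
    hence "A \<union> B \<in> L" using ideal_un[OF L(1)] L(2) by blast
    thus "C \<in> L" using ideal_down[OF L(1)] \<open>C \<subseteq> A \<union> B\<close> by blast
  qed
  thus "avoids (join L I) P" using avoids_mono av by blast
qed

lemma chain_bound:
  assumes I: "I \<in> MI" and C: "C \<in> chains (fam I)" and ne: "C \<noteq> {}"
  shows "\<Union>C \<in> fam I"
proof -
  have Cf: "C \<subseteq> fam I" using chainsD2[OF C] .
  have idl: "is_ideal J" "I \<subseteq> J" if "J \<in> C" for J using Cf that unfolding fam_def by blast+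
  obtain J0 where J0: "J0 \<in> C" using ne by blast
  have "is_ideal (\<Union>C)"
    unfolding is_ideal_def
  proof (intro conjI allI impI)
    fix A B assume "A \<in> \<Union>C" "B \<subseteq> A"
    then obtain J where "J \<in> C" "A \<in> J" by blast
    thus "B \<in> \<Union>C" using ideal_down[OF idl(1)] \<open>B \<subseteq> A\<close> by blast
  next
    fix A B assume "A \<in> \<Union>C" "B \<in> \<Union>C"
    then obtain J1 J2 where J: "J1 \<in> C" "A \<in> J1" "J2 \<in> C" "B \<in> J2" by blast
    from chainsD[OF C J(1) J(3)] show "A \<union> B \<in> \<Union>C"
    proof
      assume "J1 \<subseteq> J2" thus ?thesis using ideal_un[OF idl(1)[OF J(3)]] J by blast
    next
      assume "J2 \<subseteq> J1" thus ?thesis using ideal_un[OF idl(1)[OF J(1)]] J by blast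
    qed
  next
    fix A :: "nat set" assume "finite A"
    hence "A \<in> J0" using idl(1)[OF J0] unfolding is_ideal_def by blast
    thus "A \<in> \<Union>C" using J0 by blast
  next
    show "UNIV \<notin> \<Union>C"
    proof
      assume "UNIV \<in> \<Union>C"
      then obtain J where "J \<in> C" "UNIV \<in> J" by blast
      thus False using idl(1) unfolding is_ideal_def by blast
    qed
  qed
  moreover have "I \<subseteq> \<Union>C" using idl(2)[OF J0] J0 by blast
  moreover have "avoids (join L (\<Union>C)) P"
    if L: "is_ideal L" "I \<subseteq> L" and P: "fseq P" and av: "avoids L P" for L P
    unfolding avoids_def
  proof
    fix D assume "D \<in> join L (\<Union>C)"
    then obtain A B J where "A \<in> L" "J \<in> C" "B \<in> J" "D \<subseteq> A \<union> B" unfolding join_def by blast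
    hence D: "D \<in> join L J" unfolding join_def by blast
    have "avoids (join L J) P" using Cf \<open>J \<in> C\<close> L P av unfolding fam_def by blast
    thus "finite {n. P n \<subseteq> D}" using D unfolding avoids_def by blast
  qed
  ultimately show ?thesis unfolding fam_def by blast
qed

lemma extend:
  assumes I: "I \<in> MI" and J: "J \<in> fam I" and nm: "\<not> meager_fam_on X (restr J X)"
  shows "{C. \<exists>B\<in>J. C \<subseteq> B \<union> X} \<in> fam I"
proof -
  define J' where "J' = {C. \<exists>B\<in>J. C \<subseteq> B \<union> X}"
  have Jid: "is_ideal J" and IJ: "I \<subseteq> J"
    and Jav: "\<And>L P. is_ideal L \<Longrightarrow> I \<subseteq> L \<Longrightarrow> fseq P \<Longrightarrow> avoids L P \<Longrightarrow> avoids (join L J) P"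
    using J unfolding fam_def by blast+
  have JJ': "J \<subseteq> J'" unfolding J'_def by blast
  have key: "avoids (join L J') P" if L: "is_ideal L" "I \<subseteq> L" and P: "fseq P" and av: "avoids L P" for L P
    unfolding avoids_def
  proof (intro ballI, rule ccontr)
    fix C assume C: "C \<in> join L J'" and inf: "infinite {n. P n \<subseteq> C}"
    define L' where "L' = join L J"
    have avL': "avoids L' P" unfolding L'_def by (rule Jav[OF L P av])
    have L'id: "is_ideal L'" unfolding L'_def by (rule join_ideal[OF L(1) Jid P avL'[unfolded L'_def]])
    have JL': "J \<subseteq> L'" unfolding L'_def by (rule join_right[OF L(1)])
    obtain A B' B where AB: "A \<in> L" "B \<in> J" "B' \<subseteq> B \<union> X" "C \<subseteq> A \<union> B'"
      using C unfolding join_def J'_def by blast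
    define A0 where "A0 = A \<union> B"
    have A0: "A0 \<in> L'" unfolding A0_def L'_def join_def using AB(1,2) by blast
    have CA0: "C \<subseteq> A0 \<union> X" using AB(3,4) unfolding A0_def by blast
    define N where "N = {n. P n \<subseteq> C \<and> \<not> P n \<subseteq> A0}"
    have fin0: "finite {n. P n \<subseteq> A0}" using avL' A0 unfolding avoids_def by blast
    have "{n. P n \<subseteq> C} \<subseteq> N \<union> {n. P n \<subseteq> A0}" unfolding N_def by blast
    hence infN: "infinite N" using inf fin0 finite_subset by (metis finite_UnI)
    define e where "e = enumerate N"
    have eN: "e k \<in> N" for k unfolding e_def using enumerate_in_set[OF infN] .
    have sme: "strict_mono e" unfolding e_def using strict_mono_enumerate[OF infN] .
    have ek: "k \<le> e k" for k using sme by (simp add: strict_mono_imp_increasing)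
    define Q where "Q k = P (e k) \<inter> X" for k
    have fQ: "fseq Q" unfolding fseq_def
    proof (intro allI conjI ballI)
      fix k show "finite (Q k)" using P unfolding fseq_def Q_def by blast
    next
      fix k
      have "P (e k) \<subseteq> C" "\<not> P (e k) \<subseteq> A0" using eN[of k] unfolding N_def by blast+
      then show "Q k \<noteq> {}" using CA0 unfolding Q_def by blast
    next
      fix k x assume "x \<in> Q k"
      hence "e k \<le> x" using P unfolding fseq_def Q_def by blast
      thus "k \<le> x" using ek[of k] by linarith
    qed
    have QX: "Q k \<subseteq> X" for k unfolding Q_def by blast
    have rX: "A \<subseteq> X" if "A \<in> restr J X" for A using that unfolding restr_def by blast
    have "\<not> avoids (restr J X) Q" using easy[OF fQ QX _ rX] nm by blast
    then obtain B0 where B0: "B0 \<in> J" "B0 \<subseteq> X" and infB: "infinite {k. Q k \<subseteq> B0}"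
      unfolding avoids_def restr_def by blast
    have AB0: "A0 \<union> B0 \<in> L'" using ideal_un[OF L'id A0] JL' B0(1) by blast
    have sub: "e ` {k. Q k \<subseteq> B0} \<subseteq> {n. P n \<subseteq> A0 \<union> B0}"
    proof
      fix n assume "n \<in> e ` {k. Q k \<subseteq> B0}"
      then obtain k where k: "n = e k" "Q k \<subseteq> B0" by blast
      have "P (e k) \<subseteq> C" using eN[of k] unfolding N_def by blast
      hence "P (e k) \<subseteq> A0 \<union> X" using CA0 by blast
      hence "P (e k) \<subseteq> A0 \<union> B0" using k(2) unfolding Q_def by blast
      thus "n \<in> {n. P n \<subseteq> A0 \<union> B0}" using k(1) by simp
    qed
    have "inj_on e {k. Q k \<subseteq> B0}" using strict_mono_imp_inj_on[OF sme] inj_on_subset by blast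
    hence "infinite (e ` {k. Q k \<subseteq> B0})" using infB finite_image_iff by blast
    hence "infinite {n. P n \<subseteq> A0 \<union> B0}" using sub finite_subset by blast
    thus False using avL' AB0 unfolding avoids_def by blast
  qed
  obtain P0 where P0: "fseq P0" "avoids I P0" using MI_avoid[OF I] by blast
  have Iid: "is_ideal I" using I unfolding MI_def by blast
  have "avoids (join I J') P0" using key[OF Iid subset_refl P0] .
  hence UJ': "UNIV \<notin> J'" using avoids_UNIV[OF P0(1)] join_right[OF Iid] by blast
  have "is_ideal J'"
    unfolding is_ideal_def
  proof (intro conjI allI impI UJ')
    fix A B assume "A \<in> J'" "B \<subseteq> A" thus "B \<in> J'" unfolding J'_def by blast
  next
    fix A B assume "A \<in> J'" "B \<in> J'"
    then obtain B1 B2 where "B1 \<in> J" "A \<subseteq> B1 \<union> X" "B2 \<in> J" "B \<subseteq> B2 \<union> X" unfolding J'_def by blast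
    moreover have "B1 \<union> B2 \<in> J" using ideal_un[OF Jid] calculation by blast
    ultimately show "A \<union> B \<in> J'" unfolding J'_def by blast
  next
    fix A :: "nat set" assume "finite A"
    hence "A \<in> J" using Jid unfolding is_ideal_def by blast
    thus "A \<in> J'" using JJ' by blast
  qed
  moreover have "I \<subseteq> J'" using IJ JJ' by blast
  ultimately show ?thesis unfolding fam_def J'_def[symmetric] using key by blast
qed

theorem mainTheorem7:
  shows "\<exists>\<Phi>. \<forall>I\<in>MI. \<Phi> I \<in> MH \<and> I \<subseteq> \<Phi> I \<and> sep_equiv (\<Phi> I) I"
proof -
  have "\<exists>J. J \<in> MH \<and> I \<subseteq> J \<and> sep_equiv J I" if I: "I \<in> MI" for I
  proof -
    have "\<forall>C\<in>chains (fam I). \<exists>U\<in>fam I. \<forall>X\<in>C. X \<subseteq> U"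
    proof
      fix C assume C: "C \<in> chains (fam I)"
      show "\<exists>U\<in>fam I. \<forall>X\<in>C. X \<subseteq> U"
      proof (cases "C = {}")
        case True thus ?thesis using I_in_fam[OF I] by blast
      next
        case False thus ?thesis using chain_bound[OF I C False] by blast
      qed
    qed
    from Zorn_Lemma2[OF this] obtain J where J: "J \<in> fam I" and max: "\<And>X. X \<in> fam I \<Longrightarrow> J \<subseteq> X \<Longrightarrow> X = J"
      by blast
    have Jid: "is_ideal J" and IJ: "I \<subseteq> J"
      and Jav: "\<And>L P. is_ideal L \<Longrightarrow> I \<subseteq> L \<Longrightarrow> fseq P \<Longrightarrow> avoids L P \<Longrightarrow> avoids (join L J) P"
      using J unfolding fam_def by blast+
    have Iid: "is_ideal I" using I unfolding MI_def by blast
    have joinMI: "join L J \<in> MI \<and> L \<subseteq> join L J \<and> J \<subseteq> join L J" if L: "L \<in> MI" "I \<subseteq> L" for L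
    proof -
      have Lid: "is_ideal L" using L unfolding MI_def by blast
      obtain P where P: "fseq P" "avoids L P" using MI_avoid[OF L(1)] by blast
      have av: "avoids (join L J) P" using Jav[OF Lid L(2) P] .
      have "is_ideal (join L J)" using join_ideal[OF Lid Jid P(1) av] .
      moreover have "meager_fam (join L J)" using meager_from_avoids[OF P(1) av] .
      ultimately show ?thesis using join_left[OF Jid] join_right[OF Lid] unfolding MI_def by blast
    qed
    have "J \<in> MH"
      unfolding MH_def
    proof (intro CollectI conjI allI impI Jid)
      fix X assume X: "X \<notin> J"
      show "meager_fam_on X (restr J X)"
      proof (rule ccontr)
        assume nm: "\<not> meager_fam_on X (restr J X)"
        define J' where "J' = {C. \<exists>B\<in>J. C \<subseteq> B \<union> X}"
        have "J' \<in> fam I" unfolding J'_def by (rule extend[OF I J nm])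
        moreover have "J \<subseteq> J'" unfolding J'_def by blast
        ultimately have "J' = J" using max by blast
        moreover have "X \<in> J'" unfolding J'_def using ideal_empty[OF Jid] by blast
        ultimately show False using X by blast
      qed
    qed
    moreover have "sep_equiv J I"
      unfolding sep_equiv_def disjoint_ideals_def
    proof (intro ballI iffI)
      fix K assume K: "K \<in> MI" and nc: "\<not> compatible_ideals K J"
      show "\<not> compatible_ideals K I"
      proof
        assume "compatible_ideals K I"
        then obtain L where L: "L \<in> MI" "K \<subseteq> L" "I \<subseteq> L" unfolding compatible_ideals_def by blast
        have "join L J \<in> MI" "L \<subseteq> join L J" "J \<subseteq> join L J" using joinMI[OF L(1,3)] by blast+
        hence "compatible_ideals K J" unfolding compatible_ideals_def using L(2) by blast
        thus False using nc by blast
      qed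
    next
      fix K assume K: "K \<in> MI" and nc: "\<not> compatible_ideals K I"
      show "\<not> compatible_ideals K J"
      proof
        assume "compatible_ideals K J"
        then obtain L where "L \<in> MI" "K \<subseteq> L" "J \<subseteq> L" unfolding compatible_ideals_def by blast
        hence "compatible_ideals K I" unfolding compatible_ideals_def using IJ by blast
        thus False using nc by blast
      qed
    qed
    ultimately show ?thesis using IJ by blast
  qed
  hence "\<forall>I\<in>MI. \<exists>J. J \<in> MH \<and> I \<subseteq> J \<and> sep_equiv J I" by blast
  thus ?thesis by (rule bchoice)
qed

end
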